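(* Every metacyclic subgroup of a finite symmetric group $S_m$ contains at most $4$ transpositions, and this bound is attained: the metacyclic subgroup $\langle (1\,2\,3)(4\,5),(1\,2)\rangle\le S_5$ contains exactly the four transpositions $(1\,2),(2\,3),(1\,3),(4\,5)$.
   Context: A group is metacyclic if it has a cyclic normal subgroup with cyclic quotient. *)

theory Defs
  imports "HOL-Algebra.Algebra"
begin

definition is_cyclic_group :: "('a, 'b) monoid_scheme \<Rightarrow> bool" where
  "is_cyclic_group G \<longleftrightarrow> group G \<and> (\<exists>g \<in> carrier G. carrier G = generate G {g})"

definition metacyclic :: "('a, 'b) monoid_scheme \<Rightarrow> bool" where
  "metacyclic G \<longleftrightarrow> group G \<and>
     (\<exists>N. N \<lhd> G \<and> is_cyclic_group (G\<lparr>carrier := N\<rparr>) \<and> is_cyclic_group (G Mod N))"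

definition transpositions_in :: "(nat \<Rightarrow> nat) set \<Rightarrow> (nat \<Rightarrow> nat) set" where
  "transpositions_in H = {p \<in> H. \<exists>a b. a \<noteq> b \<and> p = Transposition.transpose a b}"

end

theory Submission
  imports Defs
begin


lemma (in group) pow_mod_ord:
  "c \<in> carrier G \<Longrightarrow> c [^] (i::nat) = c [^] (i mod ord c)"
  by (metis pow_ord_eq_1 nat_pow_one r_one nat_pow_closed nat_pow_mult nat_pow_pow mod_mult_div_eq)

lemma ntk: "0 < m \<Longrightarrow> 0 < (n::nat) \<Longrightarrow> n dvd m*i \<Longrightarrow> \<not> n dvd i \<Longrightarrow> \<exists>k. m * (i mod n) = n * k \<and> 0 < k \<and> k < m"
proof -
  assume m: "0 < m" and a: "0 < n" "n dvd m*i" "\<not> n dvd i"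
  let ?r = "i mod n"
  have "m * ?r mod n = 0" using a(2) mod_mult_right_eq[of m i n] by (simp add: dvd_eq_mod_eq_0)
  then obtain k where k: "m * ?r = n * k" by (auto simp: dvd_eq_mod_eq_0[symmetric])
  have r: "?r < n" "?r \<noteq> 0" using a by (auto simp: dvd_eq_mod_eq_0)
  have "m > 0" by (rule m)
  then have "n * k < n * m" using k r by (metis mult.commute mult_less_cancel2)
  then have "k < m" by simp
  moreover have "k > 0" using k r \<open>m > 0\<close> by (metis mult_0_right mult_is_0 neq0_conv)
  ultimately show ?thesis using k by blast
qed

lemma nt2: "0 < (n::nat) \<Longrightarrow> n dvd 2*i \<Longrightarrow> \<not> n dvd i \<Longrightarrow> i mod n = n div 2"
proof -
  assume a: "0 < n" "n dvd 2*i" "\<not> n dvd i"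
  then obtain k where k: "2 * (i mod n) = n * k" "0 < k" "k < 2" using ntk[of 2 n i] a by auto
  then have "k = 1" by simp
  then have "2 * (i mod n) = n" using k by simp
  then show ?thesis by simp
qed

lemma nt3: "0 < (n::nat) \<Longrightarrow> n dvd 3*i \<Longrightarrow> \<not> n dvd i \<Longrightarrow> 3 * (i mod n) = n \<or> 3 * (i mod n) = 2 * n"
proof -
  assume a: "0 < n" "n dvd 3*i" "\<not> n dvd i"
  then obtain k where k: "3 * (i mod n) = n * k" "0 < k" "k < 3" using ntk[of 3 n i] a by auto
  then have "k = 1 \<or> k = 2" by auto
  then show ?thesis using k by auto
qed

lemma cyc2:
  fixes G (structure)
  assumes "group G" "finite (carrier G)" "c \<in> carrier G" "carrier G = generate G {c}"
    "x \<in> carrier G" "y \<in> carrier G" "x \<otimes>\<^bsub>G\<^esub> x = \<one>\<^bsub>G\<^esub>" "y \<otimes>\<^bsub>G\<^esub> y = \<one>\<^bsub>G\<^esub>"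
    "x \<noteq> \<one>\<^bsub>G\<^esub>" "y \<noteq> \<one>\<^bsub>G\<^esub>"
  shows "x = y"
proof -
  interpret group G by fact
  have gen: "carrier G = {c [^] k | k. k \<in> (UNIV :: nat set)}"
    using assms(4) generate_pow_on_finite_carrier[OF assms(2,3)] by simp
  have n: "ord c > 0" using ord_ge_1[OF assms(2,3)] by simp
  have key: "z = c [^] (ord c div 2)" if z: "z \<in> carrier G" "z \<otimes> z = \<one>" "z \<noteq> \<one>" for z
  proof -
    obtain i where i: "z = c [^] (i::nat)" using z gen by auto
    have "c [^] (2*i) = \<one>" using z i assms(3) by (simp add: nat_pow_mult[symmetric] mult_2)
    then have "ord c dvd 2*i" using pow_eq_id assms(3) by blast
    moreover have "\<not> ord c dvd i" using z i pow_eq_id assms(3) by blast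
    ultimately have "i mod ord c = ord c div 2" using nt2 n by blast
    then show ?thesis using i pow_mod_ord[OF assms(3), of i] by simp
  qed
  show ?thesis using key assms by metis
qed

lemma cyc3:
  fixes G (structure)
  assumes "group G" "finite (carrier G)" "c \<in> carrier G" "carrier G = generate G {c}"
    "x \<in> carrier G" "y \<in> carrier G" "x \<otimes>\<^bsub>G\<^esub> x \<otimes>\<^bsub>G\<^esub> x = \<one>\<^bsub>G\<^esub>" "y \<otimes>\<^bsub>G\<^esub> y \<otimes>\<^bsub>G\<^esub> y = \<one>\<^bsub>G\<^esub>"
    "x \<noteq> \<one>\<^bsub>G\<^esub>" "y \<noteq> \<one>\<^bsub>G\<^esub>"
  shows "y = x \<or> y = x \<otimes>\<^bsub>G\<^esub> x"
proof -
  interpret group G by fact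
  have gen: "carrier G = {c [^] k | k. k \<in> (UNIV :: nat set)}"
    using assms(4) generate_pow_on_finite_carrier[OF assms(2,3)] by simp
  have n: "ord c > 0" using ord_ge_1[OF assms(2,3)] by simp
  have key: "\<exists>r. z = c [^] r \<and> (3 * r = ord c \<or> 3 * r = 2 * ord c)"
    if z: "z \<in> carrier G" "z \<otimes> z \<otimes> z = \<one>" "z \<noteq> \<one>" for z
  proof -
    obtain i where i: "z = c [^] (i::nat)" using z gen by auto
    have "c [^] (3*i) = c [^] i \<otimes> c [^] i \<otimes> c [^] i" using assms(3)
      by (simp add: nat_pow_mult numeral_3_eq_3 algebra_simps)
    then have "c [^] (3*i) = \<one>" using z i by simp
    then have "ord c dvd 3*i" using pow_eq_id assms(3) by blast
    moreover have "\<not> ord c dvd i" using z i pow_eq_id assms(3) by blast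
    ultimately have "3 * (i mod ord c) = ord c \<or> 3 * (i mod ord c) = 2 * ord c" using nt3 n by blast
    then show ?thesis using i pow_mod_ord[OF assms(3), of i] by blast
  qed
  obtain r where r: "x = c [^] r" "3 * r = ord c \<or> 3 * r = 2 * ord c" using key[OF assms(5,7,9)] by blast
  obtain s where s: "y = c [^] s" "3 * s = ord c \<or> 3 * s = 2 * ord c" using key[OF assms(6,8,10)] by blast
  have xx: "x \<otimes> x = c [^] (r + r)" using r assms(3) by (simp add: nat_pow_mult)
  show ?thesis
  proof (cases "r = s")
    case True then show ?thesis using r s by simp
  next
    case False
    then have "3*r = ord c \<and> 3*s = 2*ord c \<or> 3*r = 2*ord c \<and> 3*s = ord c" using r s by auto
    then show ?thesis
    proof
      assume h: "3*r = ord c \<and> 3*s = 2*ord c"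
      then have "s = r + r" by simp
      then show ?thesis using xx s by simp
    next
      assume h: "3*r = 2*ord c \<and> 3*s = ord c"
      then have "r + r = ord c + s" by presburger
      have "s < ord c" using n h by presburger
      then have "(r + r) mod ord c = s" using \<open>r + r = ord c + s\<close> by simp
      moreover have "x \<otimes> x = c [^] ((r+r) mod ord c)"
        using xx pow_mod_ord[OF assms(3), of "r+r"] by (rule trans)
      ultimately show ?thesis using s(1) by simp
    qed
  qed
qed




lemma three_elems:
  assumes "finite E" "card E > 2"
  obtains e f g where "e \<in> E" "f \<in> E" "g \<in> E" "e \<noteq> f" "e \<noteq> g" "f \<noteq> g"
proof -
  obtain e where e: "e \<in> E" using assms by (metis all_not_in_conv card.empty not_less_zero)
  have "card (E - {e}) > 1" using assms e by simp
  then obtain f where f: "f \<in> E - {e}" by (metis all_not_in_conv card.empty not_less_zero)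
  have "card (E - {e} - {f}) > 0" using assms e f \<open>card (E - {e}) > 1\<close> by simp
  then obtain g where g: "g \<in> E - {e} - {f}" by (metis all_not_in_conv card.empty less_irrefl)
  show ?thesis using that e f g by blast
qed

lemma comb:
  assumes fin: "finite E" and c2: "\<forall>e\<in>E. card e = 2"
    and F1: "\<forall>e\<in>E. \<forall>f\<in>E. \<forall>g\<in>E. \<forall>h\<in>E. e \<noteq> f \<longrightarrow> e \<inter> f \<noteq> {} \<longrightarrow> g \<noteq> h \<longrightarrow> g \<inter> h \<noteq> {} \<longrightarrow> e \<union> f = g \<union> h"
    and F2: "\<forall>e\<in>E. \<forall>f\<in>E. \<forall>g\<in>E. e \<inter> f = {} \<longrightarrow> e \<inter> g = {} \<longrightarrow> f \<inter> g = {} \<longrightarrow> False"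
  shows "card E \<le> 4"
proof (cases "\<exists>e\<in>E. \<exists>f\<in>E. e \<noteq> f \<and> e \<inter> f \<noteq> {}")
  case True
  then obtain e f where ef: "e \<in> E" "f \<in> E" "e \<noteq> f" "e \<inter> f \<noteq> {}" by blast
  define XX where "XX = e \<union> f"
  have fe: "finite e" "finite f" using c2 ef by (metis card.infinite zero_neq_numeral)+
  have "card (e \<inter> f) \<ge> 1" using ef fe by (simp add: Suc_leI card_gt_0_iff)
  moreover have "card e + card f = card XX + card (e \<inter> f)" unfolding XX_def using card_Un_Int fe by blast
  ultimately have cX: "card XX \<le> 3" using c2 ef by simp
  have finX: "finite XX" using fe XX_def by simp
  define A1 where "A1 = {d \<in> E. d \<subseteq> XX}"
  define A2 where "A2 = {d \<in> E. d \<inter> XX = {}}"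
  have sub: "E \<subseteq> A1 \<union> A2"
  proof
    fix d assume d: "d \<in> E"
    show "d \<in> A1 \<union> A2"
    proof (cases "d \<inter> e \<noteq> {} \<or> d \<inter> f \<noteq> {}")
      case True
      then have "d \<subseteq> XX"
      proof
        assume h: "d \<inter> e \<noteq> {}"
        show ?thesis
        proof (cases "d = e")
          case False then show ?thesis using F1[rule_format, OF d ef(1) ef(1) ef(2)] ef h XX_def by blast
        qed (simp add: XX_def)
      next
        assume h: "d \<inter> f \<noteq> {}"
        show ?thesis
        proof (cases "d = f")
          case False then show ?thesis using F1[rule_format, OF d ef(2) ef(1) ef(2)] ef h XX_def by blast
        qed (simp add: XX_def)
      qed
      then show ?thesis using d A1_def by blast
    next
      case False
      then show ?thesis using d A2_def XX_def by blast
    qed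
  qed
  have "A1 \<subseteq> {B. B \<subseteq> XX \<and> card B = 2}" using A1_def c2 by blast
  moreover have "finite {B. B \<subseteq> XX \<and> card B = 2}" using finX by simp
  ultimately have "card A1 \<le> card {B. B \<subseteq> XX \<and> card B = 2}" by (rule card_mono[rotated])
  then have "card A1 \<le> card XX choose 2" using n_subsets[OF finX, of 2] by simp
  also have "\<dots> \<le> 3"
  proof -
    have "card XX \<in> {0,1,2,3}" using cX by auto
    then show ?thesis by (auto simp: choose_two)
  qed
  finally have a1: "card A1 \<le> 3" .
  have "\<forall>a\<in>A2. \<forall>b\<in>A2. a = b"
  proof (intro ballI, rule ccontr)
    fix a b assume ab: "a \<in> A2" "b \<in> A2" "a \<noteq> b"
    have aE: "a \<in> E" "b \<in> E" "a \<inter> XX = {}" "b \<inter> XX = {}" using ab A2_def by auto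
    have "a \<noteq> {}" using c2 aE by fastforce
    show False
    proof (cases "a \<inter> b = {}")
      case True
      moreover have "e \<inter> a = {}" "e \<inter> b = {}" using aE XX_def by auto
      ultimately show False using F2[rule_format, OF ef(1) aE(1) aE(2)] by blast
    next
      case False
      then have "a \<union> b = XX" using F1[rule_format, OF aE(1) aE(2) ef(1) ef(2)] ab ef XX_def by blast
      then show False using aE \<open>a \<noteq> {}\<close> by blast
    qed
  qed
  then have a2: "card A2 \<le> 1" using fin A2_def by (simp add: card_le_Suc0_iff_eq)
  have "card E \<le> card (A1 \<union> A2)" using sub fin A1_def A2_def by (intro card_mono) auto
  also have "\<dots> \<le> card A1 + card A2" by (rule card_Un_le)
  finally show ?thesis using a1 a2 by simp
next
  case False
  show ?thesis
  proof (rule ccontr)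
    assume "\<not> card E \<le> 4"
    then have "card E > 2" by simp
    then obtain e f g where efg: "e \<in> E" "f \<in> E" "g \<in> E" "e \<noteq> f" "e \<noteq> g" "f \<noteq> g"
      using three_elems fin by blast
    then have "e \<inter> f = {}" "e \<inter> g = {}" "f \<inter> g = {}" using False by blast+
    then show False using F2[rule_format, OF efg(1-3)] by blast
  qed
qed




definition msupp :: "('a \<Rightarrow> 'a) \<Rightarrow> 'a set" where "msupp p = {k. p k \<noteq> k}"

lemma supp_tr: "a \<noteq> b \<Longrightarrow> msupp (Transposition.transpose a b) = {a,b}"
  by (auto simp: msupp_def transpose_def)

lemma tr_eq_supp: "a \<noteq> b \<Longrightarrow> c \<noteq> d \<Longrightarrow> {a,b} = {c,d} \<Longrightarrow> Transposition.transpose a b = Transposition.transpose c d"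
  by (auto simp: doubleton_eq_iff transpose_commute)

lemma neqI: "f x \<noteq> g x \<Longrightarrow> f \<noteq> g" by auto

lemma comm3:
  assumes "a \<noteq> b" "a \<noteq> c" "b \<noteq> c"
  defines "z \<equiv> Transposition.transpose a b \<circ> Transposition.transpose a c \<circ> Transposition.transpose a b \<circ> Transposition.transpose a c"
  shows "z \<noteq> id" "z \<circ> z \<circ> z = id" "msupp z = {a,b,c}"
proof -
  have zf: "z = (\<lambda>x. if x = a then b else if x = b then c else if x = c then a else x)"
    unfolding z_def using assms by (intro ext) (simp add: transpose_def)
  show "z \<noteq> id" unfolding z_def by (rule neqI[of _ a]) (use assms in \<open>auto simp: transpose_def\<close>)
  show "z \<circ> z \<circ> z = id" unfolding zf using assms by (intro ext) simp
  show "msupp z = {a,b,c}" unfolding zf msupp_def using assms by auto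
qed

lemma supp_sq: "z \<circ> z \<circ> z = id \<Longrightarrow> msupp (z \<circ> z) = msupp z"
  unfolding msupp_def by (auto simp: fun_eq_iff) (metis comp_apply)+

lemma overlap_norm:
  assumes "a \<noteq> b" "c \<noteq> d" "Transposition.transpose a b \<noteq> Transposition.transpose c d" "{a,b} \<inter> {c,d} \<noteq> {}"
  obtains p q r where "p \<noteq> q" "p \<noteq> r" "q \<noteq> r" "Transposition.transpose a b = Transposition.transpose p q"
     "Transposition.transpose c d = Transposition.transpose p r" "{a,b} \<union> {c,d} = {p,q,r}"
proof -
  have "a = c \<or> a = d \<or> b = c \<or> b = d" using assms(4) by auto
  then show ?thesis
  proof (elim disjE)
    assume h: "a = c"
    then have "b \<noteq> d" using assms(3) by auto
    then show ?thesis using that[of a b d] h assms by auto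
  next
    assume h: "a = d"
    then have "b \<noteq> c" using assms(3) by (auto simp: transpose_commute)
    then show ?thesis using that[of a b c] h assms by (auto simp: transpose_commute)
  next
    assume h: "b = c"
    then have "a \<noteq> d" using assms(3) by (auto simp: transpose_commute)
    then show ?thesis using that[of b a d] h assms by (auto simp: transpose_commute)
  next
    assume h: "b = d"
    then have "a \<noteq> c" using assms(3) by (auto simp: transpose_commute)
    then show ?thesis using that[of b a c] h assms by (auto simp: transpose_commute)
  qed
qed

lemma disjoint3:
  fixes N :: "('a \<Rightarrow> 'a) set"
  assumes Q: "\<And>x y. x \<in> {s,t,u} \<Longrightarrow> y \<in> {s,t,u} \<Longrightarrow> x \<in> N \<or> y \<in> N \<or> x \<circ> y \<in> N"
    and C2: "\<And>x y. x \<in> N \<Longrightarrow> y \<in> N \<Longrightarrow> x \<circ> x = id \<Longrightarrow> y \<circ> y = id \<Longrightarrow> x \<noteq> id \<Longrightarrow> y \<noteq> id \<Longrightarrow> x = y"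
    and st: "s = Transposition.transpose a b" "t = Transposition.transpose c d" "u = Transposition.transpose e f"
    and ne: "a \<noteq> b" "c \<noteq> d" "e \<noteq> f"
    and dj: "{a,b} \<inter> {c,d} = {}" "{a,b} \<inter> {e,f} = {}" "{c,d} \<inter> {e,f} = {}"
  shows False
proof -
  have D: "False" if "x \<in> N" "y \<in> N" "x \<circ> x = id" "y \<circ> y = id" "x \<noteq> id" "y \<noteq> id" "x \<noteq> y" for x y
    using C2 that by blast
  have i1: "s \<circ> s = id" "t \<circ> t = id" "u \<circ> u = id" using st by auto
  have i2: "(s \<circ> t) \<circ> (s \<circ> t) = id" "(s \<circ> u) \<circ> (s \<circ> u) = id" "(t \<circ> u) \<circ> (t \<circ> u) = id"
    using st ne dj by (auto simp: fun_eq_iff transpose_def)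
  have n1: "s \<noteq> id" "t \<noteq> id" "u \<noteq> id" using st ne by (auto simp: transpose_eq_id_iff)
  have n2: "s \<circ> t \<noteq> id" "s \<circ> u \<noteq> id" "t \<circ> u \<noteq> id"
  proof -
    show "s \<circ> t \<noteq> id" using st ne dj by (intro neqI[of _ a]) (auto simp: transpose_def)
    show "s \<circ> u \<noteq> id" using st ne dj by (intro neqI[of _ a]) (auto simp: transpose_def)
    show "t \<circ> u \<noteq> id" using st ne dj by (intro neqI[of _ c]) (auto simp: transpose_def)
  qed
  have d1: "s \<noteq> t" "s \<noteq> u" "t \<noteq> u"
  proof -
    show "s \<noteq> t" using st ne dj by (intro neqI[of _ a]) (auto simp: transpose_def)
    show "s \<noteq> u" using st ne dj by (intro neqI[of _ a]) (auto simp: transpose_def)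
    show "t \<noteq> u" using st ne dj by (intro neqI[of _ c]) (auto simp: transpose_def)
  qed
  have d2: "s \<noteq> t \<circ> u" "t \<noteq> s \<circ> u" "u \<noteq> s \<circ> t"
  proof -
    show "s \<noteq> t \<circ> u" using st ne dj by (intro neqI[of _ a]) (auto simp: transpose_def)
    show "t \<noteq> s \<circ> u" using st ne dj by (intro neqI[of _ c]) (auto simp: transpose_def)
    show "u \<noteq> s \<circ> t" using st ne dj by (intro neqI[of _ e]) (auto simp: transpose_def)
  qed
  have d3: "s \<circ> t \<noteq> s \<circ> u" "s \<circ> t \<noteq> t \<circ> u" "s \<circ> u \<noteq> t \<circ> u"
  proof -
    show "s \<circ> t \<noteq> s \<circ> u" using st ne dj by (intro neqI[of _ c]) (auto simp: transpose_def)
    show "s \<circ> t \<noteq> t \<circ> u" using st ne dj by (intro neqI[of _ a]) (auto simp: transpose_def)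
    show "s \<circ> u \<noteq> t \<circ> u" using st ne dj by (intro neqI[of _ a]) (auto simp: transpose_def)
  qed
  have q1: "s \<in> N \<or> t \<in> N \<or> s \<circ> t \<in> N" using Q by blast
  have q2: "s \<in> N \<or> u \<in> N \<or> s \<circ> u \<in> N" using Q by blast
  have q3: "t \<in> N \<or> u \<in> N \<or> t \<circ> u \<in> N" using Q by blast
  show False
    using q1 q2 q3 D[OF _ _ i1(1) i1(2) n1(1) n1(2) d1(1)] D[OF _ _ i1(1) i1(3) n1(1) n1(3) d1(2)]
      D[OF _ _ i1(2) i1(3) n1(2) n1(3) d1(3)]
      D[OF _ _ i1(1) i2(3) n1(1) n2(3) d2(1)] D[OF _ _ i1(2) i2(2) n1(2) n2(2) d2(2)]
      D[OF _ _ i1(3) i2(1) n1(3) n2(1) d2(3)]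
      D[OF _ _ i2(1) i2(2) n2(1) n2(2) d3(1)]
    by blast
qed




lemma K_facts:
  "carrier ((sym_group m)\<lparr>carrier := H\<rparr>) = H"
  "monoid.mult ((sym_group m)\<lparr>carrier := H\<rparr>) = (\<circ>)"
  "one ((sym_group m)\<lparr>carrier := H\<rparr>) = id"
  by (simp_all add: sym_group_def)

lemma K_group: "subgroup H (sym_group m) \<Longrightarrow> group ((sym_group m)\<lparr>carrier := H\<rparr>)"
  by (rule group.subgroup_imp_group[OF sym_group_is_group])

lemma finH: "subgroup H (sym_group m) \<Longrightarrow> finite H"
proof -
  assume "subgroup H (sym_group m)"
  then have "H \<subseteq> {p. p permutes {1..m}}" using subgroup.subset sym_group_carrier by blast
  then show "finite H" using finite_permutations[of "{1..m}"] finite_subset by blast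
qed

lemma comm_in_N:
  assumes sg: "subgroup H (sym_group m)" and nN: "N \<lhd> (sym_group m)\<lparr>carrier := H\<rparr>"
    and cQ: "is_cyclic_group ((sym_group m)\<lparr>carrier := H\<rparr> Mod N)"
    and x: "x \<in> H" and y: "y \<in> H"
  shows "\<exists>n\<in>N. x \<circ> y = n \<circ> (y \<circ> x)"
proof -
  define K where "K = (sym_group m)\<lparr>carrier := H\<rparr>"
  have gK: "group K" using K_group[OF sg] K_def by simp
  have cK: "carrier K = H" "monoid.mult K = (\<circ>)" "one K = id" unfolding K_def by (simp_all add: K_facts)
  interpret N: normal N K using nN K_def by simp
  obtain g where g: "g \<in> carrier (K Mod N)" "carrier (K Mod N) = generate (K Mod N) {g}"
    using cQ unfolding is_cyclic_group_def K_def by auto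
  interpret Q: group "K Mod N" using N.factorgroup_is_group .
  have X: "r_coset K N x \<in> carrier (K Mod N)" using x cK by (auto simp: carrier_FactGroup)
  have Y: "r_coset K N y \<in> carrier (K Mod N)" using y cK by (auto simp: carrier_FactGroup)
  obtain i where i: "r_coset K N x = g [^]\<^bsub>K Mod N\<^esub> (i::int)" using X g Q.generate_pow[OF g(1)] by auto
  obtain j where j: "r_coset K N y = g [^]\<^bsub>K Mod N\<^esub> (j::int)" using Y g Q.generate_pow[OF g(1)] by auto
  have "r_coset K N x \<otimes>\<^bsub>K Mod N\<^esub> r_coset K N y = r_coset K N y \<otimes>\<^bsub>K Mod N\<^esub> r_coset K N x"
    unfolding i j using Q.int_pow_mult[OF g(1), of i j] Q.int_pow_mult[OF g(1), of j i] by (simp add: add.commute)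
  then have "r_coset K N (x \<otimes>\<^bsub>K\<^esub> y) = r_coset K N (y \<otimes>\<^bsub>K\<^esub> x)"
    using N.rcos_sum x y cK by simp
  moreover have "x \<otimes>\<^bsub>K\<^esub> y \<in> r_coset K N (x \<otimes>\<^bsub>K\<^esub> y)"
    using group.rcos_self[OF gK _ N.subgroup_axioms] x y cK
    by (metis gK group.is_monoid monoid.m_closed)
  ultimately have "x \<circ> y \<in> r_coset K N (y \<circ> x)" using cK by simp
  then show ?thesis by (auto simp: r_coset_def cK)
qed

lemma inv_in_N:
  assumes sg: "subgroup H (sym_group m)" and nN: "N \<lhd> (sym_group m)\<lparr>carrier := H\<rparr>"
    and cQ: "is_cyclic_group ((sym_group m)\<lparr>carrier := H\<rparr> Mod N)"
    and x: "x \<in> H" and y: "y \<in> H" and xx: "x \<circ> x = id" and yy: "y \<circ> y = id"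
  shows "x \<in> N \<or> y \<in> N \<or> x \<circ> y \<in> N"
proof -
  define K where "K = (sym_group m)\<lparr>carrier := H\<rparr>"
  have gK: "group K" using K_group[OF sg] K_def by simp
  have cK: "carrier K = H" "monoid.mult K = (\<circ>)" "one K = id" unfolding K_def by (simp_all add: K_facts)
  interpret N: normal N K using nN K_def by simp
  obtain g where g: "g \<in> carrier (K Mod N)" "carrier (K Mod N) = generate (K Mod N) {g}"
    using cQ unfolding is_cyclic_group_def K_def by auto
  interpret Q: group "K Mod N" using N.factorgroup_is_group .
  have fin: "finite (carrier (K Mod N))" using finH[OF sg] cK by (simp add: carrier_FactGroup)
  have NK: "N \<subseteq> carrier K" using N.subset .
  have X: "r_coset K N x \<in> carrier (K Mod N)" using x cK by (auto simp: carrier_FactGroup)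
  have Y: "r_coset K N y \<in> carrier (K Mod N)" using y cK by (auto simp: carrier_FactGroup)
  have sq: "r_coset K N z \<otimes>\<^bsub>K Mod N\<^esub> r_coset K N z = \<one>\<^bsub>K Mod N\<^esub>" if "z \<in> H" "z \<circ> z = id" for z
  proof -
    have "r_coset K N z \<otimes>\<^bsub>K Mod N\<^esub> r_coset K N z = r_coset K N (z \<otimes>\<^bsub>K\<^esub> z)"
      using N.rcos_sum that cK by simp
    also have "\<dots> = r_coset K N \<one>\<^bsub>K\<^esub>" using that cK by simp
    also have "\<dots> = N" using group.coset_mult_one[OF gK NK] .
    finally show ?thesis by simp
  qed
  have self: "z \<in> r_coset K N z" if "z \<in> H" for z
    using group.rcos_self[OF gK _ N.subgroup_axioms] that cK by simp
  show ?thesis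
  proof (cases "r_coset K N x = N \<or> r_coset K N y = N")
    case True
    then show ?thesis using self x y by auto
  next
    case False
    then have "r_coset K N x = r_coset K N y"
      using cyc2[OF Q.is_group fin g(1) g(2) X Y sq[OF x xx] sq[OF y yy]] by simp
    then have "r_coset K N (x \<otimes>\<^bsub>K\<^esub> y) = N"
      using N.rcos_sum[of x y] sq[OF x xx] x y cK by simp
    moreover have "x \<otimes>\<^bsub>K\<^esub> y \<in> H" using x y cK by (metis gK group.is_monoid monoid.m_closed)
    ultimately show ?thesis using self[of "x \<otimes>\<^bsub>K\<^esub> y"] cK by auto
  qed
qed

lemma N_cyclic_facts:
  assumes sg: "subgroup H (sym_group m)" and nN: "N \<lhd> (sym_group m)\<lparr>carrier := H\<rparr>"
    and cN: "is_cyclic_group ((sym_group m)\<lparr>carrier := H\<rparr>\<lparr>carrier := N\<rparr>)"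
  shows "\<And>x y. x \<in> N \<Longrightarrow> y \<in> N \<Longrightarrow> x \<circ> x = id \<Longrightarrow> y \<circ> y = id \<Longrightarrow> x \<noteq> id \<Longrightarrow> y \<noteq> id \<Longrightarrow> x = y"
    and "\<And>x y. x \<in> N \<Longrightarrow> y \<in> N \<Longrightarrow> x \<circ> x \<circ> x = id \<Longrightarrow> y \<circ> y \<circ> y = id \<Longrightarrow> x \<noteq> id \<Longrightarrow> y \<noteq> id \<Longrightarrow> y = x \<or> y = x \<circ> x"
proof -
  define L where "L = (sym_group m)\<lparr>carrier := H\<rparr>\<lparr>carrier := N\<rparr>"
  have cL: "carrier L = N" "monoid.mult L = (\<circ>)" "one L = id" unfolding L_def by (simp_all add: sym_group_def)
  obtain c where c: "group L" "c \<in> carrier L" "carrier L = generate L {c}"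
    using cN unfolding is_cyclic_group_def L_def by auto
  have "N \<subseteq> H" using normal_imp_subgroup[OF nN] subgroup.subset K_facts by metis
  then have fin: "finite (carrier L)" using finH[OF sg] cL finite_subset by metis
  show "\<And>x y. x \<in> N \<Longrightarrow> y \<in> N \<Longrightarrow> x \<circ> x = id \<Longrightarrow> y \<circ> y = id \<Longrightarrow> x \<noteq> id \<Longrightarrow> y \<noteq> id \<Longrightarrow> x = y"
    using cyc2[OF c(1) fin c(2) c(3)] cL by simp
  show "\<And>x y. x \<in> N \<Longrightarrow> y \<in> N \<Longrightarrow> x \<circ> x \<circ> x = id \<Longrightarrow> y \<circ> y \<circ> y = id \<Longrightarrow> x \<noteq> id \<Longrightarrow> y \<noteq> id \<Longrightarrow> y = x \<or> y = x \<circ> x"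
    using cyc3[OF c(1) fin c(2) c(3)] cL by simp
qed




lemma solve_n:
  assumes "s \<circ> s = id" "t \<circ> t = id" "s \<circ> t = n \<circ> (t \<circ> s)" shows "n = s \<circ> t \<circ> s \<circ> t"
proof (rule ext)
  fix x
  have ss: "s (s y) = y" "t (t y) = y" for y using assms(1,2) by (metis comp_apply id_apply)+
  have "(s \<circ> t) (s (t x)) = (n \<circ> (t \<circ> s)) (s (t x))" using assms(3) by simp
  then show "n x = (s \<circ> t \<circ> s \<circ> t) x" using ss by simp
qed

theorem part1:
  assumes sg: "subgroup H (sym_group m)" and mc: "metacyclic ((sym_group m)\<lparr>carrier := H\<rparr>)"
  shows "finite (transpositions_in H) \<and> card (transpositions_in H) \<le> 4"
proof -
  obtain N where nN: "N \<lhd> (sym_group m)\<lparr>carrier := H\<rparr>"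
    and cN: "is_cyclic_group ((sym_group m)\<lparr>carrier := H\<rparr>\<lparr>carrier := N\<rparr>)"
    and cQ: "is_cyclic_group ((sym_group m)\<lparr>carrier := H\<rparr> Mod N)"
    using mc unfolding metacyclic_def by blast
  note C2 = N_cyclic_facts(1)[OF sg nN cN]
  note C3 = N_cyclic_facts(2)[OF sg nN cN]
  define T where "T = transpositions_in H"
  have TH: "T \<subseteq> H" unfolding T_def transpositions_in_def by auto
  have finT: "finite T" using finH[OF sg] TH finite_subset by blast
  have Tt: "\<exists>a b. a \<noteq> b \<and> p = Transposition.transpose a b" if "p \<in> T" for p
    using that unfolding T_def transpositions_in_def by auto
  have inj: "inj_on msupp T"
  proof (rule inj_onI)
    fix p q assume pq: "p \<in> T" "q \<in> T" "msupp p = msupp q"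
    obtain a b where ab: "a \<noteq> b" "p = Transposition.transpose a b" using Tt pq by blast
    obtain c d where cd: "c \<noteq> d" "q = Transposition.transpose c d" using Tt pq by blast
    show "p = q" using pq ab cd supp_tr tr_eq_supp by metis
  qed
  have core: "\<exists>z\<in>N. z \<noteq> id \<and> z \<circ> z \<circ> z = id \<and> msupp z = msupp s \<union> msupp t"
    if st: "s \<in> T" "t \<in> T" "s \<noteq> t" "msupp s \<inter> msupp t \<noteq> {}" for s t
  proof -
    obtain a b where ab: "a \<noteq> b" "s = Transposition.transpose a b" using Tt st by blast
    obtain c d where cd: "c \<noteq> d" "t = Transposition.transpose c d" using Tt st by blast
    obtain p q r where pqr: "p \<noteq> q" "p \<noteq> r" "q \<noteq> r" "s = Transposition.transpose p q"
      "t = Transposition.transpose p r" "{a,b} \<union> {c,d} = {p,q,r}"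
      using overlap_norm[of a b c d] ab cd st supp_tr by metis
    obtain n where n: "n \<in> N" "s \<circ> t = n \<circ> (t \<circ> s)" using comm_in_N[OF sg nN cQ] st TH by blast
    define z where "z = s \<circ> t \<circ> s \<circ> t"
    have "n = z" unfolding z_def using solve_n[OF _ _ n(2)] pqr by simp
    then have zN: "z \<in> N" using n by simp
    have z1: "z \<noteq> id" unfolding z_def pqr(4,5) by (rule comm3[OF pqr(1-3)])
    have z2: "z \<circ> z \<circ> z = id" unfolding z_def pqr(4,5) by (rule comm3[OF pqr(1-3)])
    have z3: "msupp z = {p,q,r}" unfolding z_def pqr(4,5) by (rule comm3[OF pqr(1-3)])
    have "msupp s \<union> msupp t = {p,q,r}" using pqr supp_tr[OF pqr(1)] supp_tr[OF pqr(2)] by auto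
    then show ?thesis using zN z1 z2 z3 by blast
  qed
  have F1: "msupp s \<union> msupp t = msupp u \<union> msupp v"
    if h: "s \<in> T" "t \<in> T" "s \<noteq> t" "msupp s \<inter> msupp t \<noteq> {}"
       "u \<in> T" "v \<in> T" "u \<noteq> v" "msupp u \<inter> msupp v \<noteq> {}" for s t u v
  proof -
    obtain z1 where z1: "z1 \<in> N" "z1 \<noteq> id" "z1 \<circ> z1 \<circ> z1 = id" "msupp z1 = msupp s \<union> msupp t"
      using core h by blast
    obtain z2 where z2: "z2 \<in> N" "z2 \<noteq> id" "z2 \<circ> z2 \<circ> z2 = id" "msupp z2 = msupp u \<union> msupp v"
      using core h by blast
    have "z2 = z1 \<or> z2 = z1 \<circ> z1" using C3[OF z1(1) z2(1) z1(3) z2(3) z1(2) z2(2)] .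
    then have "msupp z2 = msupp z1" using supp_sq[OF z1(3)] by auto
    then show ?thesis using z1 z2 by simp
  qed
  have F2: False if h: "s \<in> T" "t \<in> T" "u \<in> T" "msupp s \<inter> msupp t = {}"
     "msupp s \<inter> msupp u = {}" "msupp t \<inter> msupp u = {}" for s t u
  proof -
    obtain a b where ab: "a \<noteq> b" "s = Transposition.transpose a b" using Tt h by blast
    obtain c d where cd: "c \<noteq> d" "t = Transposition.transpose c d" using Tt h by blast
    obtain e f where ef: "e \<noteq> f" "u = Transposition.transpose e f" using Tt h by blast
    have Q: "x \<in> N \<or> y \<in> N \<or> x \<circ> y \<in> N" if "x \<in> {s,t,u}" "y \<in> {s,t,u}" for x y
    proof -
      have "x \<in> H" "y \<in> H" using that h \<open>t \<in> T\<close> \<open>u \<in> T\<close> TH by auto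
      moreover have "x \<circ> x = id" "y \<circ> y = id" using that ab cd ef by auto
      ultimately show ?thesis using inv_in_N[OF sg nN cQ] by blast
    qed
    have ms: "msupp s = {a,b}" "msupp t = {c,d}" "msupp u = {e,f}"
      using supp_tr[OF ab(1)] supp_tr[OF cd(1)] supp_tr[OF ef(1)] ab(2) cd(2) ef(2) by simp_all
    have dj: "{a,b} \<inter> {c,d} = {}" "{a,b} \<inter> {e,f} = {}" "{c,d} \<inter> {e,f} = {}"
      using h(4-6) unfolding ms by simp_all
    show False
      by (rule disjoint3[of s t u N, OF Q C2 ab(2) cd(2) ef(2) ab(1) cd(1) ef(1) dj])
  qed
  have "card (msupp ` T) \<le> 4"
  proof (rule comb)
    show "finite (msupp ` T)" using finT by simp
    show "\<forall>e\<in>msupp ` T. card e = 2" using Tt supp_tr by fastforce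
    show "\<forall>e\<in>msupp ` T. \<forall>f\<in>msupp ` T. \<forall>g\<in>msupp ` T. \<forall>h\<in>msupp ` T.
      e \<noteq> f \<longrightarrow> e \<inter> f \<noteq> {} \<longrightarrow> g \<noteq> h \<longrightarrow> g \<inter> h \<noteq> {} \<longrightarrow> e \<union> f = g \<union> h"
      using F1 by blast
    show "\<forall>e\<in>msupp ` T. \<forall>f\<in>msupp ` T. \<forall>g\<in>msupp ` T. e \<inter> f = {} \<longrightarrow> e \<inter> g = {} \<longrightarrow> f \<inter> g = {} \<longrightarrow> False"
      using F2 by blast
  qed
  then show ?thesis using finT card_image[OF inj] T_def by simp
qed




definition lp :: "(nat \<Rightarrow> nat) \<Rightarrow> nat list" where "lp p = map p [1,2,3,4,5]"
definition cmp :: "nat list \<Rightarrow> nat list \<Rightarrow> nat list" where "cmp xs ys = map (\<lambda>j. xs ! (j - 1)) ys"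

lemma in15: "(x::nat) \<in> {1..5} \<Longrightarrow> x = 1 \<or> x = 2 \<or> x = 3 \<or> x = 4 \<or> x = 5" by auto

lemma lp_inj: assumes "p permutes {1..5}" "q permutes {1..5}" "lp p = lp q" shows "p = q"
proof (rule ext)
  fix x
  show "p x = q x"
  proof (cases "x \<in> {1..5}")
    case True
    have "p 1 = q 1 \<and> p 2 = q 2 \<and> p 3 = q 3 \<and> p 4 = q 4 \<and> p 5 = q 5" using assms(3) by (simp add: lp_def)
    then show ?thesis using in15[OF True] by auto
  next
    case False
    then show ?thesis using assms(1,2) permutes_not_in by metis
  qed
qed

lemma lp_comp: assumes "q permutes {1..5}" shows "lp (p \<circ> q) = cmp (lp p) (lp q)"
proof -
  have "map p [1,2,3,4,5] ! (q k - 1) = p (q k)" if "k \<in> set [1,2,3,4,5]" for k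
  proof -
    have "k \<in> {1..5}" using that by auto
    then have "q k \<in> {1..5}" using permutes_in_image[OF assms] by blast
    from in15[OF this] show ?thesis by (elim disjE) simp_all
  qed
  then show ?thesis unfolding lp_def cmp_def by simp
qed

lemma lp_id: "lp id = [1,2,3,4,5]" by (simp add: lp_def)

definition g0 :: "nat \<Rightarrow> nat" where "g0 = cycle_of_list [1, 2, 3] \<circ> cycle_of_list [4, 5]"
definition h0 :: "nat \<Rightarrow> nat" where "h0 = cycle_of_list [1, 2]"

definition Ns :: "nat list list" where
  "Ns = [[1,2,3,4,5],[2,3,1,5,4],[3,1,2,4,5],[1,2,3,5,4],[2,3,1,4,5],[3,1,2,5,4]]"
definition Ls :: "nat list list" where
  "Ls = Ns @ [[2,1,3,4,5],[3,2,1,5,4],[1,3,2,4,5],[2,1,3,5,4],[3,2,1,4,5],[1,3,2,5,4]]"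
definition WN where "WN = [id, g0, g0 \<circ> g0, g0 \<circ> g0 \<circ> g0, g0 \<circ> g0 \<circ> g0 \<circ> g0, g0 \<circ> g0 \<circ> g0 \<circ> g0 \<circ> g0]"
definition WL where "WL = WN @ map (\<lambda>w. w \<circ> h0) WN"

lemma g0_perm: "g0 permutes {1..5}"
  unfolding g0_def by (simp, intro permutes_compose permutes_swap_id) auto
lemma h0_perm: "h0 permutes {1..5}"
  unfolding h0_def by (simp, intro permutes_compose permutes_swap_id) auto

lemma lp_g0: "lp g0 = [2,3,1,5,4]" by (simp add: lp_def g0_def transpose_def)
lemma lp_h0: "lp h0 = [2,1,3,4,5]" by (simp add: lp_def h0_def transpose_def)

lemma WN_perm: "set WN \<subseteq> {p. p permutes {1..5}}"
  unfolding WN_def using g0_perm by (auto intro!: permutes_compose)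
lemma WL_perm: "set WL \<subseteq> {p. p permutes {1..5}}"
  unfolding WL_def using WN_perm h0_perm by (auto intro!: permutes_compose)

lemma map_WN: "map lp WN = Ns"
  by (simp add: WN_def Ns_def lp_def g0_def transpose_def)
lemma map_WL: "map lp WL = Ls"
proof -
  have "map lp (map (\<lambda>w. w \<circ> h0) WN) = map (\<lambda>xs. cmp xs (lp h0)) (map lp WN)"
    using lp_comp[OF h0_perm] by simp
  then show ?thesis unfolding WL_def Ls_def using map_WN by (simp add: lp_h0 Ns_def cmp_def)
qed

lemma Ls_closed: "\<forall>xs\<in>set Ls. \<forall>ys\<in>set Ls. cmp xs ys \<in> set Ls"
  by (simp add: Ls_def Ns_def cmp_def)
lemma Ns_closed: "\<forall>xs\<in>set Ns. \<forall>ys\<in>set Ns. cmp xs ys \<in> set Ns"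
  by (simp add: Ns_def cmp_def)
lemma Ls_inv: "\<forall>xs\<in>set Ls. \<exists>ys\<in>set Ls. cmp xs ys = [1,2,3,4,5] \<and> cmp ys xs = [1,2,3,4,5]"
  by (simp add: Ls_def Ns_def cmp_def)
lemma Ns_inv: "\<forall>xs\<in>set Ns. \<exists>ys\<in>set Ns. cmp xs ys = [1,2,3,4,5] \<and> cmp ys xs = [1,2,3,4,5]"
  by (simp add: Ns_def cmp_def)
lemma Ns_normal: "\<forall>xs\<in>set Ls. \<forall>ys\<in>set Ls. cmp xs ys = [1,2,3,4,5] \<longrightarrow> (\<forall>hs\<in>set Ns. cmp (cmp xs hs) ys \<in> set Ns)"
  by (simp add: Ls_def Ns_def cmp_def)
lemma Ns_index2: "\<forall>xs\<in>set Ls. xs \<in> set Ns \<or> cmp xs [2,1,3,4,5] \<in> set Ns"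
  by (simp add: Ls_def Ns_def cmp_def)




abbreviation "S5 \<equiv> sym_group 5"

lemma surj_W: assumes "map lp Ws = Ms" "ys \<in> set Ms" shows "\<exists>w\<in>set Ws. lp w = ys"
  using assms by auto

lemma sub_lists:
  assumes W: "set Ws \<subseteq> {p. p permutes {1..5}}" "map lp Ws = Ms"
    and A1: "[1,2,3,4,5] \<in> set Ms"
    and A2: "\<forall>xs\<in>set Ms. \<forall>ys\<in>set Ms. cmp xs ys \<in> set Ms"
    and A3: "\<forall>xs\<in>set Ms. \<exists>ys\<in>set Ms. cmp xs ys = [1,2,3,4,5] \<and> cmp ys xs = [1,2,3,4,5]"
  shows "subgroup {p. p permutes {1..5} \<and> lp p \<in> set Ms} S5"
proof -
  interpret S: group S5 by (rule sym_group_is_group)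
  let ?E = "{p. p permutes {1..5} \<and> lp p \<in> set Ms}"
  show ?thesis
  proof (rule S.subgroupI)
    show "?E \<subseteq> carrier S5" by (auto simp: sym_group_carrier)
    show "?E \<noteq> {}" using A1 lp_id by (metis (mono_tags, lifting) empty_iff mem_Collect_eq permutes_id)
  next
    fix a b assume ab: "a \<in> ?E" "b \<in> ?E"
    then show "a \<otimes>\<^bsub>S5\<^esub> b \<in> ?E" using A2 lp_comp by (auto simp: sym_group_mult intro: permutes_compose)
  next
    fix a assume a: "a \<in> ?E"
    obtain ys where ys: "ys \<in> set Ms" "cmp (lp a) ys = [1,2,3,4,5]" "cmp ys (lp a) = [1,2,3,4,5]"
      using A3 a by blast
    obtain w where w: "w \<in> set Ws" "lp w = ys" using surj_W[OF W(2) ys(1)] by blast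
    have wp: "w permutes {1..5}" using W(1) w(1) by auto
    have ap: "a permutes {1..5}" using a by simp
    have "lp (w \<circ> a) = lp id" using lp_comp[OF ap, of w] ys w lp_id by simp
    then have "w \<circ> a = id" using lp_inj wp ap permutes_compose permutes_id by metis
    then have "inv\<^bsub>S5\<^esub> a = w" using S.inv_equality[of w a] wp ap
      by (simp add: sym_group_mult sym_group_one sym_group_carrier)
    then show "inv\<^bsub>S5\<^esub> a \<in> ?E" using wp w ys by simp
  qed
qed

definition "EE = {p. p permutes {1..5} \<and> lp p \<in> set Ls}"
definition "NN = {p. p permutes {1..5} \<and> lp p \<in> set Ns}"

lemma subE: "subgroup EE S5"
  unfolding EE_def by (rule sub_lists[OF WL_perm map_WL _ Ls_closed Ls_inv]) (simp add: Ls_def Ns_def)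
lemma subN: "subgroup NN S5"
  unfolding NN_def by (rule sub_lists[OF WN_perm map_WN _ Ns_closed Ns_inv]) (simp add: Ns_def)
lemma NE: "NN \<subseteq> EE" unfolding NN_def EE_def Ls_def by auto

lemma gen_eq: "generate S5 {g0, h0} = EE"
proof
  interpret S: group S5 by (rule sym_group_is_group)
  show "generate S5 {g0, h0} \<subseteq> EE"
  proof (rule S.generate_subgroup_incl[OF _ subE])
    show "{g0, h0} \<subseteq> EE" unfolding EE_def using g0_perm h0_perm lp_g0 lp_h0 by (simp add: Ls_def Ns_def)
  qed
  let ?G = "generate S5 {g0, h0}"
  have cl: "a \<circ> b \<in> ?G" if "a \<in> ?G" "b \<in> ?G" for a b
    using generate.eng[OF that] by (simp add: sym_group_mult)
  have gg: "g0 \<in> ?G" "h0 \<in> ?G" "id \<in> ?G"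
    using generate.incl[of g0 "{g0,h0}" S5] generate.incl[of h0 "{g0,h0}" S5] generate.one[of S5 "{g0,h0}"]
    by (auto simp: sym_group_one)
  have WG: "set WL \<subseteq> ?G" unfolding WL_def WN_def using gg by (auto intro!: cl)
  show "EE \<subseteq> ?G"
  proof
    fix p assume p: "p \<in> EE"
    then obtain w where w: "w \<in> set WL" "lp w = lp p" using surj_W[OF map_WL] EE_def by auto
    have "w = p" using lp_inj w p WL_perm EE_def by auto
    then show "p \<in> ?G" using WG w by auto
  qed
qed




lemma trans_ex: "(a::nat) \<noteq> b \<Longrightarrow> t = Transposition.transpose a b \<Longrightarrow> \<exists>x y. x \<noteq> y \<and> t = Transposition.transpose x y" by blast

lemma trans_EE:
  "transpositions_in EE = {Transposition.transpose 1 2, Transposition.transpose 2 3,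
                Transposition.transpose 1 3, Transposition.transpose 4 5}"
proof
  let ?F = "{Transposition.transpose 1 2, Transposition.transpose 2 3,
                Transposition.transpose 1 3, Transposition.transpose (4::nat) 5}"
  have Fp: "\<forall>t\<in>?F. t permutes {1..5}" by (simp add: permutes_swap_id)
  show "?F \<subseteq> transpositions_in EE"
  proof
    fix t assume t: "t \<in> ?F"
    have "lp t \<in> set Ls" using t by (elim insertE emptyE) (simp_all add: lp_def Ls_def Ns_def)
    moreover have "\<exists>a b. a \<noteq> b \<and> t = Transposition.transpose a b"
      using t by (elim insertE emptyE) (rule trans_ex[rotated], assumption, simp)+
    ultimately show "t \<in> transpositions_in EE" using Fp t by (auto simp: transpositions_in_def EE_def)
  qed
  show "transpositions_in EE \<subseteq> ?F"
  proof
    fix p assume "p \<in> transpositions_in EE"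
    then obtain a b where p: "p \<in> EE" "a \<noteq> b" "p = Transposition.transpose a b"
      unfolding transpositions_in_def by auto
    have pp: "p permutes {1..5}" "lp p \<in> set Ls" using p EE_def by auto
    have "a \<in> {1..5}"
    proof (rule ccontr)
      assume "a \<notin> {1..5}" then have "p a = a" using pp permutes_not_in by metis
      then show False using p by simp
    qed
    moreover have "b \<in> {1..5}"
    proof (rule ccontr)
      assume "b \<notin> {1..5}" then have "p b = b" using pp permutes_not_in by metis
      then show False using p by simp
    qed
    ultimately have "lp p \<in> lp ` ?F" using pp(2) p(2,3)
      by (elim in15[elim_format] disjE) (simp_all add: lp_def Ls_def Ns_def transpose_def)
    then obtain t where t: "lp p = lp t" "t \<in> ?F" by (rule imageE)
    have "t permutes {1..5}" by (rule bspec[OF Fp t(2)])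
    then have "t = p" by (rule lp_inj[OF _ pp(1) t(1)[symmetric]])
    then show "p \<in> ?F" using t(2) by simp
  qed
qed

lemma meta_EE: "metacyclic (S5\<lparr>carrier := EE\<rparr>)"
proof -
  interpret S: group S5 by (rule sym_group_is_group)
  define K where "K = S5\<lparr>carrier := EE\<rparr>"
  have gK: "group K" using S.subgroup_imp_group[OF subE] K_def by simp
  have cK: "carrier K = EE" "monoid.mult K = (\<circ>)" "one K = id" unfolding K_def by (simp_all add: sym_group_def)
  have subNK: "subgroup NN K" unfolding K_def by (rule S.subgroup_incl[OF subN subE NE])
  have EEp: "x permutes {1..5}" "lp x \<in> set Ls" if "x \<in> EE" for x using that EE_def by auto
  have NNi: "x \<in> NN" if "x permutes {1..5}" "lp x \<in> set Ns" for x using that NN_def by auto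
  have normal: "NN \<lhd> K"
  proof -
    have "\<forall>x\<in>carrier K. \<forall>h\<in>NN. x \<otimes>\<^bsub>K\<^esub> h \<otimes>\<^bsub>K\<^esub> inv\<^bsub>K\<^esub> x \<in> NN"
    proof (intro ballI)
      fix x h assume x: "x \<in> carrier K" and h: "h \<in> NN"
      have xE: "x \<in> EE" using x cK by simp
      have invK: "inv\<^bsub>K\<^esub> x = inv\<^bsub>S5\<^esub> x" unfolding K_def using S.m_inv_consistent[OF subE xE] .
      have yE: "inv\<^bsub>S5\<^esub> x \<in> EE" using subgroup.m_inv_closed[OF subE xE] .
      have "x \<otimes>\<^bsub>S5\<^esub> inv\<^bsub>S5\<^esub> x = id" using S.r_inv[of x] xE subgroup.subset[OF subE] by (auto simp: sym_group_one)
      then have xy: "x \<circ> inv\<^bsub>S5\<^esub> x = id" by (simp add: sym_group_mult)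
      have hp: "h permutes {1..5}" "lp h \<in> set Ns" using h NN_def by auto
      have "cmp (lp x) (lp (inv\<^bsub>S5\<^esub> x)) = [1,2,3,4,5]"
        using lp_comp[OF EEp(1)[OF yE], of x] xy lp_id by simp
      then have "cmp (cmp (lp x) (lp h)) (lp (inv\<^bsub>S5\<^esub> x)) \<in> set Ns"
        using Ns_normal EEp[OF xE] EEp[OF yE] hp by blast
      moreover have "lp (x \<circ> h \<circ> inv\<^bsub>S5\<^esub> x) = cmp (cmp (lp x) (lp h)) (lp (inv\<^bsub>S5\<^esub> x))"
        using lp_comp EEp(1)[OF yE] hp(1) by (simp add: lp_comp)
      moreover have "x \<circ> h \<circ> inv\<^bsub>S5\<^esub> x permutes {1..5}"
        using EEp(1)[OF yE] EEp(1)[OF xE] hp(1) by (intro permutes_compose)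
      ultimately show "x \<otimes>\<^bsub>K\<^esub> h \<otimes>\<^bsub>K\<^esub> inv\<^bsub>K\<^esub> x \<in> NN"
        using NNi invK cK by simp
    qed
    then show ?thesis using group.normal_inv_iff[OF gK] subNK by blast
  qed
  have cycN: "is_cyclic_group (K\<lparr>carrier := NN\<rparr>)"
  proof -
    define L where "L = K\<lparr>carrier := NN\<rparr>"
    have gL: "group L" using group.subgroup_imp_group[OF gK subNK] L_def by simp
    have cL: "carrier L = NN" "monoid.mult L = (\<circ>)" "one L = id" unfolding L_def K_def by (simp_all add: sym_group_def)
    have g0N: "g0 \<in> NN" unfolding NN_def using g0_perm lp_g0 by (simp add: Ns_def)
    let ?G = "generate L {g0}"
    have cl: "a \<circ> b \<in> ?G" if "a \<in> ?G" "b \<in> ?G" for a b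
      using generate.eng[OF that] cL by simp
    have gg: "g0 \<in> ?G" "id \<in> ?G"
      using generate.incl[of g0 "{g0}" L] generate.one[of L "{g0}"] cL by auto
    have WG: "set WN \<subseteq> ?G" unfolding WN_def using gg by (auto intro!: cl)
    have "NN \<subseteq> ?G"
    proof
      fix p assume p: "p \<in> NN"
      then obtain w where w: "w \<in> set WN" "lp w = lp p" using surj_W[OF map_WN] NN_def by auto
      have "w = p" using lp_inj w p WN_perm NN_def by auto
      then show "p \<in> ?G" using WG w by auto
    qed
    moreover have "?G \<subseteq> NN" using group.generate_incl[OF gL] g0N cL by auto
    ultimately show ?thesis unfolding is_cyclic_group_def L_def[symmetric] using gL g0N cL by auto
  qed
  have cycQ: "is_cyclic_group (K Mod NN)"
  proof -
    interpret N: normal NN K by (rule normal)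
    interpret Q: group "K Mod NN" by (rule N.factorgroup_is_group)
    have h0E: "h0 \<in> EE" unfolding EE_def using h0_perm lp_h0 by (simp add: Ls_def Ns_def)
    let ?c = "r_coset K NN h0"
    have cQ: "?c \<in> carrier (K Mod NN)" using h0E cK by (auto simp: carrier_FactGroup)
    have "carrier (K Mod NN) \<subseteq> generate (K Mod NN) {?c}"
    proof
      fix XC assume "XC \<in> carrier (K Mod NN)"
      then obtain x where x: "x \<in> EE" "XC = r_coset K NN x" using cK by (auto simp: carrier_FactGroup)
      have "lp x \<in> set Ns \<or> cmp (lp x) [2,1,3,4,5] \<in> set Ns" using Ns_index2 EEp[OF x(1)] by blast
      then show "XC \<in> generate (K Mod NN) {?c}"
      proof
        assume "lp x \<in> set Ns"
        then have "x \<in> NN" using NNi EEp x by blast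
        then have "XC = NN" using x subgroup.rcos_const[OF subNK gK] by simp
        then show ?thesis using generate.one[of "K Mod NN" "{?c}"] by simp
      next
        assume a: "cmp (lp x) [2,1,3,4,5] \<in> set Ns"
        define n where "n = x \<circ> h0"
        have nN: "n \<in> NN" using a lp_comp[OF h0_perm, of x] lp_h0 NNi EEp(1)[OF x(1)] h0_perm
          unfolding n_def by (simp add: permutes_compose)
        have hh: "h0 \<circ> h0 = id" unfolding h0_def by simp
        have "x = n \<circ> h0" unfolding n_def using hh by (simp add: comp_assoc)
        then have "x \<in> r_coset K NN h0" using nN cK by (auto simp: r_coset_def)
        then have "r_coset K NN h0 = r_coset K NN x" using group.repr_independence[OF gK _ _ subNK] h0E cK by simp
        then show ?thesis using x generate.incl[of ?c "{?c}"] by simp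
      qed
    qed
    moreover have "generate (K Mod NN) {?c} \<subseteq> carrier (K Mod NN)" using Q.generate_incl cQ by simp
    ultimately show ?thesis unfolding is_cyclic_group_def using Q.is_group cQ by auto
  qed
  show ?thesis unfolding metacyclic_def K_def[symmetric] using gK normal cycN cycQ by blast
qed


theorem mainTheorem12:
  shows "(\<forall>(m::nat) H. subgroup H (sym_group m) \<and> metacyclic ((sym_group m)\<lparr>carrier := H\<rparr>)
            \<longrightarrow> finite (transpositions_in H) \<and> card (transpositions_in H) \<le> 4)
     \<and> (let H0 = generate (sym_group 5)
                   {cycle_of_list [1, 2, 3] \<circ> cycle_of_list [4, 5], cycle_of_list [1, 2]}
        in subgroup H0 (sym_group 5) \<and> metacyclic ((sym_group 5)\<lparr>carrier := H0\<rparr>)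
           \<and> transpositions_in H0 =
               {Transposition.transpose 1 2, Transposition.transpose 2 3,
                Transposition.transpose 1 3, Transposition.transpose 4 5})"
proof
  show "\<forall>(m::nat) H. subgroup H (sym_group m) \<and> metacyclic ((sym_group m)\<lparr>carrier := H\<rparr>)
            \<longrightarrow> finite (transpositions_in H) \<and> card (transpositions_in H) \<le> 4"
    using part1 by blast
  have "generate (sym_group 5)
                   {cycle_of_list [1, 2, 3] \<circ> cycle_of_list [4, 5], cycle_of_list [1, 2]} = EE"
    using gen_eq unfolding g0_def h0_def .
  then show "let H0 = generate (sym_group 5)
                   {cycle_of_list [1, 2, 3] \<circ> cycle_of_list [4, 5], cycle_of_list [1, 2]}
        in subgroup H0 (sym_group 5) \<and> metacyclic ((sym_group 5)\<lparr>carrier := H0\<rparr>)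
           \<and> transpositions_in H0 =
               {Transposition.transpose 1 2, Transposition.transpose 2 3,
                Transposition.transpose 1 3, Transposition.transpose 4 5}"
    using subE meta_EE trans_EE by (simp only: Let_def)
qed

end
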